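(* In the setting of the two-agent SIS epidemic on a finite connected edge-transitive graph $G$ with walking rate $\lambda>0$ and recovery rate $\gamma>0$ (both agents initially infected at the same vertex), let $N$ be the total number of jumps (of both walkers combined) until the two walkers first occupy the same vertex, when started at the two endpoints of an edge. Then for every $s>0$, \[ \mathcal L_T(s)=\frac{2\gamma\left(\dfrac{1-\mathbb E\Big[\big(\tfrac{2\lambda}{2\lambda+s+\gamma}\big)^N\Big]}{s+\gamma}-\dfrac{1-\mathbb E\Big[\big(\tfrac{2\lambda}{2\lambda+s+2\gamma}\big)^N\Big]}{s+2\gamma}\right)}{\dfrac{2\lambda+s}{2\lambda}-2\,\mathbb E\Big[\big(\tfrac{2\lambda}{2\lambda+s+\gamma}\big)^N\Big]+\mathbb E\Big[\big(\tfrac{2\lambda}{2\lambda+s+2\gamma}\big)^N\Big]}, \] where $\mathcal L_T(s)=\mathbb E(e^{-sT})$.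
   Context: Model. $G=(V,E)$ is a finite, connected, undirected graph which is edge-transitive: for any two edges $e_1,e_2\in E$ there is a graph automorphism mapping $e_1$ to $e_2$. Two agents move on $V$ according to independent continuous-time simple random walks: each agent stays at its current vertex for an $\mathrm{Exp}(\lambda)$ holding time, then jumps to a uniformly chosen neighbour. Each agent has a state in $\{S,I\}$. Whenever the two agents occupy the same vertex and at least one is infected, both are infected immediately. Each infected agent independently recovers (returns to $S$) after an $\mathrm{Exp}(\gamma)$ time. Initially both agents are infected and at the same vertex. $T=\inf\{t\ge0:\text{both agents are in state } S\}$ is the end of epidemic time. By edge-transitivity the distribution of $N$ does not depend on the chosen edge; $N$ depends only on $G$. *)

theory Defs
  imports "HOL-Probability.Probability"
begin

definition simple_graph :: "('v \<Rightarrow> 'v \<Rightarrow> bool) \<Rightarrow> bool" where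
  "simple_graph Adj \<longleftrightarrow> (\<forall>x y. Adj x y \<longrightarrow> Adj y x) \<and> (\<forall>x. \<not> Adj x x)"

definition graph_connected :: "('v \<Rightarrow> 'v \<Rightarrow> bool) \<Rightarrow> bool" where
  "graph_connected Adj \<longleftrightarrow> (\<forall>x y. Adj\<^sup>*\<^sup>* x y)"

definition graph_automorphism :: "('v \<Rightarrow> 'v \<Rightarrow> bool) \<Rightarrow> ('v \<Rightarrow> 'v) \<Rightarrow> bool" where
  "graph_automorphism Adj \<sigma> \<longleftrightarrow> bij \<sigma> \<and> (\<forall>x y. Adj (\<sigma> x) (\<sigma> y) \<longleftrightarrow> Adj x y)"

definition edge_transitive :: "('v \<Rightarrow> 'v \<Rightarrow> bool) \<Rightarrow> bool" where
  "edge_transitive Adj \<longleftrightarrow>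
     (\<forall>a b c d. Adj a b \<longrightarrow> Adj c d \<longrightarrow>
        (\<exists>\<sigma>. graph_automorphism Adj \<sigma> \<and> {\<sigma> a, \<sigma> b} = {c, d}))"

definition nbrs :: "('v \<Rightarrow> 'v \<Rightarrow> bool) \<Rightarrow> 'v \<Rightarrow> 'v set" where
  "nbrs Adj x = {y. Adj x y}"

definition deg :: "('v \<Rightarrow> 'v \<Rightarrow> bool) \<Rightarrow> 'v \<Rightarrow> nat" where
  "deg Adj x = card (nbrs Adj x)"

definition exp1 :: "real measure" where
  "exp1 = density lborel (exponential_density 1)"

text \<open>Driving randomness: at each step n of the jump chain, an independent Exp(1) clock
  for every potential target state y.\<close>
definition clock_space :: "(nat \<Rightarrow> 's \<Rightarrow> real) measure" where
  "clock_space = PiM UNIV (\<lambda>_. PiM UNIV (\<lambda>_. exp1))"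

text \<open>r x y = jump rate from x to y (y \<noteq> x).\<close>
definition active :: "('s \<Rightarrow> 's \<Rightarrow> real) \<Rightarrow> 's \<Rightarrow> 's set" where
  "active r x = {y. y \<noteq> x \<and> 0 < r x y}"

text \<open>Clock for target y rings at time e y / r x y (Exp(r x y)); holding time is the
  minimum, the next state the minimiser.\<close>
definition hold :: "('s \<Rightarrow> 's \<Rightarrow> real) \<Rightarrow> 's \<Rightarrow> ('s \<Rightarrow> real) \<Rightarrow> real" where
  "hold r x e = Min ((\<lambda>y. e y / r x y) ` active r x)"

definition next_state :: "('s \<Rightarrow> 's \<Rightarrow> real) \<Rightarrow> 's \<Rightarrow> ('s \<Rightarrow> real) \<Rightarrow> 's" where
  "next_state r x e = (if active r x = {} then x else arg_min_on (\<lambda>y. e y / r x y) (active r x))"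

primrec jump_chain :: "('s \<Rightarrow> 's \<Rightarrow> real) \<Rightarrow> 's \<Rightarrow> (nat \<Rightarrow> 's \<Rightarrow> real) \<Rightarrow> nat \<Rightarrow> 's" where
  "jump_chain r x0 \<omega> 0 = x0"
| "jump_chain r x0 \<omega> (Suc n) = next_state r (jump_chain r x0 \<omega> n) (\<omega> n)"

text \<open>Time of the n-th jump; the process equals jump_chain n on [jump_time n, jump_time (n+1)).\<close>
definition jump_time :: "('s \<Rightarrow> 's \<Rightarrow> real) \<Rightarrow> 's \<Rightarrow> (nat \<Rightarrow> 's \<Rightarrow> real) \<Rightarrow> nat \<Rightarrow> real" where
  "jump_time r x0 \<omega> n = (\<Sum>k<n. hold r (jump_chain r x0 \<omega> k) (\<omega> k))"

definition hits :: "('s \<Rightarrow> 's \<Rightarrow> real) \<Rightarrow> 's \<Rightarrow> 's set \<Rightarrow> (nat \<Rightarrow> 's \<Rightarrow> real) \<Rightarrow> bool" where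
  "hits r x0 A \<omega> \<longleftrightarrow> (\<exists>n. jump_chain r x0 \<omega> n \<in> A)"

definition hit_index :: "('s \<Rightarrow> 's \<Rightarrow> real) \<Rightarrow> 's \<Rightarrow> 's set \<Rightarrow> (nat \<Rightarrow> 's \<Rightarrow> real) \<Rightarrow> nat" where
  "hit_index r x0 A \<omega> = (LEAST n. jump_chain r x0 \<omega> n \<in> A)"

text \<open>First time the process is in A (only meaningful when hits).\<close>
definition hit_time :: "('s \<Rightarrow> 's \<Rightarrow> real) \<Rightarrow> 's \<Rightarrow> 's set \<Rightarrow> (nat \<Rightarrow> 's \<Rightarrow> real) \<Rightarrow> real" where
  "hit_time r x0 A \<omega> = jump_time r x0 \<omega> (hit_index r x0 A \<omega>)"

text \<open>Laplace transform E[exp(-s T_A)], with exp(-s \<infinity>) = 0.\<close>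
definition hit_laplace :: "('s \<Rightarrow> 's \<Rightarrow> real) \<Rightarrow> 's \<Rightarrow> 's set \<Rightarrow> real \<Rightarrow> real" where
  "hit_laplace r x0 A s =
     (\<integral>\<omega>. (if hits r x0 A \<omega> then exp (- s * hit_time r x0 A \<omega>) else 0) \<partial>clock_space)"

text \<open>Probability generating function E[z^N_A] of the number of jumps until hitting A
  (z^\<infinity> = 0).\<close>
definition hit_pgf :: "('s \<Rightarrow> 's \<Rightarrow> real) \<Rightarrow> 's \<Rightarrow> 's set \<Rightarrow> real \<Rightarrow> real" where
  "hit_pgf r x0 A z =
     (\<integral>\<omega>. (if hits r x0 A \<omega> then z ^ hit_index r x0 A \<omega> else 0) \<partial>clock_space)"

text \<open>Two independent continuous-time simple random walks, each with jump rate lam: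
  state (p1, p2); walker a jumps to each neighbour at rate lam / deg.\<close>
definition walk_rate :: "('v \<Rightarrow> 'v \<Rightarrow> bool) \<Rightarrow> real \<Rightarrow> 'v \<times> 'v \<Rightarrow> 'v \<times> 'v \<Rightarrow> real" where
  "walk_rate Adj lam x y =
     (case x of (p1, p2) \<Rightarrow>
        (\<Sum>w\<in>nbrs Adj p1. if y = (w, p2) then lam / real (deg Adj p1) else 0)
      + (\<Sum>w\<in>nbrs Adj p2. if y = (p1, w) then lam / real (deg Adj p2) else 0))"

definition meet_set :: "('v \<times> 'v) set" where
  "meet_set = {(p1, p2). p1 = p2}"

definition meet_pgf :: "('v \<Rightarrow> 'v \<Rightarrow> bool) \<Rightarrow> real \<Rightarrow> 'v \<Rightarrow> 'v \<Rightarrow> real \<Rightarrow> real" where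
  "meet_pgf Adj lam u v z = hit_pgf (walk_rate Adj lam) (u, v) meet_set z"

text \<open>State (p1, p2, i1, i2): positions and infection flags (True = I).
  After any transition the contact rule is applied: if the agents share a vertex and
  at least one is infected, both are infected.\<close>
definition contact :: "'v \<times> 'v \<times> bool \<times> bool \<Rightarrow> 'v \<times> 'v \<times> bool \<times> bool" where
  "contact x = (case x of (p1, p2, i1, i2) \<Rightarrow>
     (if p1 = p2 \<and> (i1 \<or> i2) then (p1, p2, True, True) else (p1, p2, i1, i2)))"

definition sis_rate :: "('v \<Rightarrow> 'v \<Rightarrow> bool) \<Rightarrow> real \<Rightarrow> real \<Rightarrow>
    'v \<times> 'v \<times> bool \<times> bool \<Rightarrow> 'v \<times> 'v \<times> bool \<times> bool \<Rightarrow> real" where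
  "sis_rate Adj lam gam x y =
     (case x of (p1, p2, i1, i2) \<Rightarrow>
        (\<Sum>w\<in>nbrs Adj p1. if y = contact (w, p2, i1, i2) then lam / real (deg Adj p1) else 0)
      + (\<Sum>w\<in>nbrs Adj p2. if y = contact (p1, w, i1, i2) then lam / real (deg Adj p2) else 0)
      + (if i1 \<and> y = contact (p1, p2, False, i2) then gam else 0)
      + (if i2 \<and> y = contact (p1, p2, i1, False) then gam else 0))"

definition all_susceptible :: "('v \<times> 'v \<times> bool \<times> bool) set" where
  "all_susceptible = {(p1, p2, i1, i2). \<not> i1 \<and> \<not> i2}"

definition sis_laplace :: "('v \<Rightarrow> 'v \<Rightarrow> bool) \<Rightarrow> real \<Rightarrow> real \<Rightarrow> 'v \<Rightarrow> real \<Rightarrow> real" where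
  "sis_laplace Adj lam gam x0 s = hit_laplace (sis_rate Adj lam gam) (x0, x0, True, True) all_susceptible s"

end

theory Submission
  imports Defs
begin


lemma prob_exp1: "prob_space exp1"
  unfolding exp1_def by (rule prob_space_exponential_density) simp

lemma sets_exp1[simp, measurable_cong]: "sets exp1 = sets borel"
  unfolding exp1_def by simp
lemma space_exp1[simp]: "space exp1 = UNIV"
  unfolding exp1_def by simp

lemma AE_exp1_pos: "AE x in exp1. 0 \<le> x"
  unfolding exp1_def
  by (rule AE_density[THEN iffD2]) (auto simp: exponential_density_def)

lemma AE_exp1_ne: "AE x in exp1. x \<noteq> c"
  unfolding exp1_def
  apply (rule AE_density[THEN iffD2], simp)
  using AE_lborel_singleton[of c] by eventually_elim auto

lemma nn_exp1: "(\<integral>\<^sup>+x. f x \<partial>exp1) = (\<integral>\<^sup>+x. ennreal (exponential_density 1 x) * f x \<partial>lborel)"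
  if "f \<in> borel_measurable borel"
  unfolding exp1_def using that by (subst nn_integral_density) auto

lemma exp_integral_exp1:
  assumes "c \<ge> 0"
  shows "(\<integral>\<^sup>+x. ennreal (exp (- c * x)) \<partial>exp1) = ennreal (1 / (1 + c))"
proof -
  have "(\<integral>\<^sup>+x. ennreal (exp (- c * x)) \<partial>exp1) = (\<integral>\<^sup>+x. ennreal (exponential_density 1 x) * ennreal (exp (- c * x)) \<partial>lborel)"
    by (rule nn_exp1) simp
  also have "\<dots> = (\<integral>\<^sup>+x. ennreal (1/(1+c)) * ennreal (exponential_density (1+c) x) \<partial>lborel)"
  proof (intro nn_integral_cong)
    fix x :: real
    have "exp (- x) * exp (- c * x) = 1 / (1 + c) * ((1 + c) * exp (- x * (1 + c)))"
      using assms by (simp add: exp_add[symmetric] field_simps)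
    then show "ennreal (exponential_density 1 x) * ennreal (exp (- c * x)) = ennreal (1/(1+c)) * ennreal (exponential_density (1+c) x)"
      using assms by (auto simp: exponential_density_def ennreal_mult'[symmetric] ennreal_mult[symmetric])
  qed
  also have "\<dots> = ennreal (1/(1+c)) * (\<integral>\<^sup>+x. ennreal (exponential_density (1+c) x) \<partial>lborel)"
    by (rule nn_integral_cmult) simp
  also have "(\<integral>\<^sup>+x. ennreal (exponential_density (1+c) x) \<partial>lborel) = 1"
  proof -
    interpret P: prob_space "density lborel (exponential_density (1+c))"
      using assms by (intro prob_space_exponential_density) simp
    have "emeasure (density lborel (exponential_density (1+c))) UNIV = 1"
      using P.emeasure_space_1 by simp
    then show ?thesis by (simp add: emeasure_density)
  qed
  finally show ?thesis by simp
qed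

lemma tail_exp1:
  assumes "a \<ge> 0"
  shows "(\<integral>\<^sup>+x. indicator {a<..} x \<partial>exp1) = ennreal (exp (- a))"
proof -
  interpret P: prob_space exp1 by (rule prob_exp1)
  have D: "distributed exp1 lborel (\<lambda>x. x) (exponential_density 1)"
    unfolding distributed_def exp1_def
    by (auto simp: distr_id2)
  have se: "{x\<in>space exp1. a < x} = {a<..}" by auto
  have "P.prob {a<..} = exp (- a)"
    using P.exponential_distributedD_gt[OF D assms] unfolding se by simp
  moreover have "(\<integral>\<^sup>+x. indicator {a<..} x \<partial>exp1) = emeasure exp1 {a<..}"
    by (subst nn_integral_indicator) auto
  ultimately show ?thesis by (simp add: P.emeasure_eq_measure)
qed



definition Ecl :: "('s \<Rightarrow> real) measure" where
  "Ecl = PiM UNIV (\<lambda>_. exp1)"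

lemma prob_Ecl: "prob_space Ecl"
  unfolding Ecl_def by (intro prob_space_PiM prob_exp1)

lemma clock_space_Ecl: "clock_space = PiM UNIV (\<lambda>_. Ecl)"
  unfolding clock_space_def Ecl_def ..

lemma next_state_alt:
  "active r x \<noteq> {} \<Longrightarrow> next_state r x e =
    (\<lambda>p. SOME y. p y) (\<lambda>y. y \<in> active r x \<and> \<not> (\<exists>z. z \<in> active r x \<and> e z / r x z < e y / r x y))"
  unfolding next_state_def arg_min_on_def arg_min_def is_arg_min_def by simp

lemma measurable_next_state[measurable]:
  fixes r :: "'s::finite \<Rightarrow> 's \<Rightarrow> real"
  shows "next_state r x \<in> measurable Ecl (count_space UNIV)"
proof (cases "active r x = {}")
  case True
  then show ?thesis unfolding next_state_def by simp
next
  case False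
  let ?P = "\<lambda>e. (\<lambda>y. y \<in> active r x \<and> \<not> (\<exists>z. z \<in> active r x \<and> e z / r x z < e y / r x y))"
  have "?P \<in> measurable Ecl (count_space UNIV)"
  proof (subst measurable_count_space_eq2_countable, safe)
    fix p :: "'s \<Rightarrow> bool"
    have "?P -` {p} \<inter> space Ecl = {e \<in> space Ecl. \<forall>y. (y \<in> active r x \<and> \<not> (\<exists>z\<in>active r x. e z / r x z < e y / r x y)) = p y}"
      by (rule set_eqI) (simp add: fun_eq_iff Bex_def conj_commute)
    also have "\<dots> \<in> sets Ecl"
      unfolding Ecl_def by measurable
    finally show "?P -` {p} \<inter> space Ecl \<in> sets Ecl" .
  qed auto
  then have "(\<lambda>e. (\<lambda>p. SOME y. p y) (?P e)) \<in> measurable Ecl (count_space UNIV)"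
    by (rule measurable_compose) simp
  moreover have "next_state r x = (\<lambda>e. (\<lambda>p. SOME y. p y) (?P e))"
    using next_state_alt[OF False] by (simp add: fun_eq_iff)
  ultimately show ?thesis by simp
qed

lemma measurable_hold[measurable]:
  fixes r :: "'s::finite \<Rightarrow> 's \<Rightarrow> real"
  shows "hold r x \<in> borel_measurable Ecl"
  unfolding hold_def[abs_def] Ecl_def by measurable



lemma finite_active[simp]: "finite (active (r :: 's::finite \<Rightarrow> _) x)"
  by simp

lemma key_pointwise:
  fixes r :: "'s::finite \<Rightarrow> 's \<Rightarrow> real"
  assumes y: "y \<in> active r x"
    and nt: "\<forall>z\<in>active r x - {y}. e z / r x z \<noteq> e y / r x y"
  shows "(next_state r x e = y) \<longleftrightarrow> (\<forall>z\<in>active r x - {y}. e y / r x y < e z / r x z)"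
    and "next_state r x e = y \<Longrightarrow> hold r x e = e y / r x y"
proof -
  let ?A = "active r x" and ?f = "\<lambda>z. e z / r x z"
  have ne: "?A \<noteq> {}" using y by auto
  have ns: "next_state r x e = arg_min_on ?f ?A" using ne unfolding next_state_def by simp
  note am = arg_min_if_finite[OF finite_active ne, of ?f]
  show 1: "(next_state r x e = y) \<longleftrightarrow> (\<forall>z\<in>?A - {y}. ?f y < ?f z)"
  proof
    assume "next_state r x e = y"
    then have "\<forall>z\<in>?A. \<not> ?f z < ?f y" using am ns by auto
    then show "\<forall>z\<in>?A - {y}. ?f y < ?f z" using nt by force
  next
    assume H: "\<forall>z\<in>?A - {y}. ?f y < ?f z"
    show "next_state r x e = y"
    proof (rule ccontr)
      assume "next_state r x e \<noteq> y"
      then have "?f y < ?f (arg_min_on ?f ?A)" using H am ns by auto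
      then show False using am y by auto
    qed
  qed
  assume "next_state r x e = y"
  then have H: "\<forall>z\<in>?A - {y}. ?f y < ?f z" using 1 by simp
  have "Min (?f ` ?A) = ?f y"
  proof (rule Min_eqI)
    show "finite (?f ` ?A)" by simp
    show "?f y \<in> ?f ` ?A" using y by blast
    fix w assume "w \<in> ?f ` ?A"
    then obtain z where z: "z \<in> ?A" "w = ?f z" by blast
    show "?f y \<le> w" using H z by (cases "z = y") (auto intro: less_imp_le)
  qed
  then show "hold r x e = e y / r x y" unfolding hold_def by simp
qed



lemma measurable_next_state'[measurable]:
  fixes r :: "'s::finite \<Rightarrow> 's \<Rightarrow> real"
  shows "next_state r x \<in> measurable (PiM UNIV (\<lambda>_. exp1)) (count_space UNIV)"
  using measurable_next_state[of r x] unfolding Ecl_def .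

lemma measurable_hold'[measurable]:
  fixes r :: "'s::finite \<Rightarrow> 's \<Rightarrow> real"
  shows "hold r x \<in> borel_measurable (PiM UNIV (\<lambda>_. exp1))"
  using measurable_hold[of r x] unfolding Ecl_def .

lemma D_one:
  fixes r :: "'s::finite \<Rightarrow> 's \<Rightarrow> real"
  assumes rnn: "\<And>z. 0 \<le> r x z" and y: "y \<in> active r x" and s: "0 \<le> s"
  shows "(\<integral>\<^sup>+e. ennreal (exp (- s * hold r x e)) * indicator {e. next_state r x e = y} e \<partial>Ecl)
         = ennreal (r x y / ((\<Sum>z\<in>active r x. r x z) + s))"
proof -
  interpret PS: product_sigma_finite "\<lambda>_::'s. exp1"
    by (simp add: product_sigma_finite_def prob_space_imp_sigma_finite prob_exp1)
  define A where "A = active r x"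
  define I where "I = (UNIV - {y} :: 's set)"
  define ry where "ry = r x y"
  define q where "q = (\<Sum>z\<in>A. r x z)"
  have ry: "0 < ry" using y by (simp add: active_def ry_def)
  have yA: "y \<in> A" using y by (simp add: A_def)
  have rA: "\<And>z. z \<in> A \<Longrightarrow> 0 < r x z" by (simp add: A_def active_def)
  have qd: "q = ry + (\<Sum>z\<in>A - {y}. r x z)"
    unfolding q_def ry_def using yA by (simp add: sum.remove)
  have q0: "(\<Sum>z\<in>A - {y}. r x z) \<ge> 0" using rnn by (simp add: sum_nonneg)
  have UI: "insert y I = UNIV" by (auto simp: I_def)
  have yI: "y \<notin> I" by (simp add: I_def)
  define F where "F e = ennreal (exp (- s * hold r x e)) * indicator {e. next_state r x e = y} e" for e
  have Fm: "F \<in> borel_measurable (PiM (insert y I) (\<lambda>_. exp1))"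
    unfolding UI F_def by measurable
  have "(\<integral>\<^sup>+e. F e \<partial>Ecl) = (\<integral>\<^sup>+ t. (\<integral>\<^sup>+ x'. F (x'(y := t)) \<partial>PiM I (\<lambda>_. exp1)) \<partial>exp1)"
    unfolding Ecl_def UI[symmetric] by (rule PS.product_nn_integral_insert_rev[OF _ yI Fm]) simp
  also have "\<dots> = (\<integral>\<^sup>+ t. ennreal (exp (- ((s + q - ry) / ry) * t)) \<partial>exp1)"
  proof (rule nn_integral_cong_AE)
    show "AE t in exp1. (\<integral>\<^sup>+ x'. F (x'(y := t)) \<partial>PiM I (\<lambda>_. exp1)) = ennreal (exp (- ((s + q - ry) / ry) * t))"
      using AE_exp1_pos
    proof eventually_elim
      fix t :: real assume t: "0 \<le> t"
      define c where "c z = r x z * t / ry" for z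
      define G where "G z u = (if z \<in> A then indicator {c z<..} u else (1::ennreal))" for z u
      have AEnt: "AE x' in PiM I (\<lambda>_. exp1). \<forall>z\<in>A-{y}. x' z \<noteq> c z"
      proof (rule eventually_ball_finite)
        show "finite (A - {y})" by simp
        show "\<forall>z\<in>A - {y}. AE x' in PiM I (\<lambda>_. exp1). x' z \<noteq> c z"
        proof
          fix z assume "z \<in> A - {y}"
          then have "z \<in> I" by (simp add: I_def)
          then show "AE x' in PiM I (\<lambda>_. exp1). x' z \<noteq> c z"
            using AE_PiM_component[of I "\<lambda>_. exp1" z "\<lambda>u. u \<noteq> c z"] prob_exp1 AE_exp1_ne
            by blast
        qed
      qed
      have "(\<integral>\<^sup>+ x'. F (x'(y := t)) \<partial>PiM I (\<lambda>_. exp1))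
            = (\<integral>\<^sup>+ x'. ennreal (exp (- s * (t / ry))) * (\<Prod>z\<in>I. G z (x' z)) \<partial>PiM I (\<lambda>_. exp1))"
      proof (rule nn_integral_cong_AE)
        show "AE x' in PiM I (\<lambda>_. exp1). F (x'(y := t)) = ennreal (exp (- s * (t / ry))) * (\<Prod>z\<in>I. G z (x' z))"
          using AEnt
        proof eventually_elim
          fix x' :: "'s \<Rightarrow> real" assume nt: "\<forall>z\<in>A-{y}. x' z \<noteq> c z"
          define e where "e = x'(y := t)"
          have ez: "\<And>z. z \<noteq> y \<Longrightarrow> e z = x' z" and ey: "e y = t" by (auto simp: e_def)
          have cmp: "\<And>z. z \<in> A - {y} \<Longrightarrow> (e y / r x y < e z / r x z) \<longleftrightarrow> c z < x' z"
            and neq: "\<And>z. z \<in> A - {y} \<Longrightarrow> e z / r x z \<noteq> e y / r x y"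
          proof -
            fix z assume z: "z \<in> A - {y}"
            have rz: "0 < r x z" using z rA by auto
            show "(e y / r x y < e z / r x z) \<longleftrightarrow> c z < x' z"
              using rz ry z by (simp add: ez ey c_def ry_def field_simps)
            show "e z / r x z \<noteq> e y / r x y"
              using rz ry z nt by (auto simp: ez ey c_def ry_def field_simps)
          qed
          have kp1: "(next_state r x e = y) \<longleftrightarrow> (\<forall>z\<in>A - {y}. c z < x' z)"
            using key_pointwise(1)[OF y, of e] neq cmp by (auto simp: A_def)
          have kp2: "next_state r x e = y \<Longrightarrow> hold r x e = t / ry"
            using key_pointwise(2)[OF y, of e] neq by (auto simp: A_def ey ry_def)
          have pG: "(\<Prod>z\<in>I. G z (x' z)) = (if \<forall>z\<in>A - {y}. c z < x' z then 1 else 0)"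
          proof (cases "\<forall>z\<in>A - {y}. c z < x' z")
            case True
            then have "\<And>z. z \<in> I \<Longrightarrow> G z (x' z) = 1"
              by (auto simp: G_def I_def)
            then show ?thesis using True by simp
          next
            case False
            then obtain z where z: "z \<in> A - {y}" "\<not> c z < x' z" by blast
            then have "z \<in> I" "G z (x' z) = 0" by (auto simp: G_def I_def)
            then show ?thesis using False by (intro trans[OF prod_zero]) auto
          qed
          show "F (x'(y := t)) = ennreal (exp (- s * (t / ry))) * (\<Prod>z\<in>I. G z (x' z))"
            unfolding F_def e_def[symmetric] pG using kp1 kp2 by auto
        qed
      qed
      also have "\<dots> = ennreal (exp (- s * (t / ry))) * (\<Prod>z\<in>I. (\<integral>\<^sup>+u. G z u \<partial>exp1))"
      proof -
        have Gm: "\<And>z. G z \<in> borel_measurable exp1"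
          unfolding G_def by (case_tac "z \<in> A") simp_all
        have "(\<integral>\<^sup>+x'. (\<Prod>z\<in>I. G z (x' z)) \<partial>PiM I (\<lambda>_. exp1)) = (\<Prod>z\<in>I. (\<integral>\<^sup>+u. G z u \<partial>exp1))"
          using Gm by (intro PS.product_nn_integral_prod) auto
        moreover have "(\<lambda>x'. (\<Prod>z\<in>I. G z (x' z))) \<in> borel_measurable (PiM I (\<lambda>_. exp1))"
          using Gm by measurable
        ultimately show ?thesis by (subst nn_integral_cmult) auto
      qed
      also have "(\<Prod>z\<in>I. (\<integral>\<^sup>+u. G z u \<partial>exp1)) = (\<Prod>z\<in>I. ennreal (if z \<in> A then exp (- c z) else 1))"
      proof (rule prod.cong)
        fix z assume "z \<in> I"
        show "(\<integral>\<^sup>+u. G z u \<partial>exp1) = ennreal (if z \<in> A then exp (- c z) else 1)"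
        proof (cases "z \<in> A")
          case True
          have "0 \<le> c z" using rnn t ry by (simp add: c_def)
          then show ?thesis using True tail_exp1[of "c z"] by (simp add: G_def)
        next
          case False
          interpret P: prob_space exp1 by (rule prob_exp1)
          show ?thesis using False P.emeasure_space_1 by (simp add: G_def)
        qed
      qed simp
      also have "\<dots> = ennreal (\<Prod>z\<in>I. if z \<in> A then exp (- c z) else 1)"
        by (rule prod_ennreal) simp
      also have "(\<Prod>z\<in>I. if z \<in> A then exp (- c z) else 1) = (\<Prod>z\<in>A - {y}. exp (- c z))"
      proof -
        have "(\<Prod>z\<in>I. if z \<in> A then exp (- c z) else 1) = (\<Prod>z\<in>I \<inter> A. exp (- c z))"
          by (simp add: prod.If_cases)
        also have "I \<inter> A = A - {y}" by (auto simp: I_def)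
        finally show ?thesis .
      qed
      also have "\<dots> = exp (- ((q - ry) / ry) * t)"
        by (simp add: exp_sum[symmetric] sum_negf c_def qd sum_divide_distrib[symmetric] sum_distrib_right[symmetric])
      finally have X: "(\<integral>\<^sup>+ x'. F (x'(y := t)) \<partial>PiM I (\<lambda>_. exp1)) = ennreal (exp (- s * (t / ry))) * ennreal (exp (- ((q - ry) / ry) * t))" .
      have "- s * (t / ry) + - ((q - ry) / ry) * t = - ((s + q - ry) / ry) * t"
        using ry by (simp add: field_simps)
      then have "exp (- s * (t / ry)) * exp (- ((q - ry) / ry) * t) = exp (- ((s + q - ry) / ry) * t)"
        by (simp add: exp_add[symmetric])
      then show "(\<integral>\<^sup>+ x'. F (x'(y := t)) \<partial>PiM I (\<lambda>_. exp1)) = ennreal (exp (- ((s + q - ry) / ry) * t))"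
        unfolding X by (simp add: ennreal_mult[symmetric])
    qed
  qed
  also have "\<dots> = ennreal (1 / (1 + (s + q - ry) / ry))"
    using s qd q0 ry by (intro exp_integral_exp1) simp
  also have "1 / (1 + (s + q - ry) / ry) = ry / (q + s)"
    using ry by (simp add: field_simps)
  finally show ?thesis by (simp add: F_def ry_def q_def A_def)
qed



definition Rsum :: "('s::finite \<Rightarrow> 's \<Rightarrow> real) \<Rightarrow> 's \<Rightarrow> ('s \<Rightarrow> real) \<Rightarrow> real" where
  "Rsum r x h = (\<Sum>y\<in>UNIV. if y = x then 0 else r x y * h y)"

lemma Rsum_active:
  fixes r :: "'s::finite \<Rightarrow> 's \<Rightarrow> real"
  assumes rnn: "\<And>z. 0 \<le> r x z"
  shows "Rsum r x h = (\<Sum>y\<in>active r x. r x y * h y)"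
  unfolding Rsum_def
proof (rule sum.mono_neutral_cong_right)
  show "\<forall>i\<in>UNIV - active r x. (if i = x then 0 else r x i * h i) = 0"
    using rnn by (auto simp: active_def) (metis less_eq_real_def)
qed (auto simp: active_def)

lemma next_state_in:
  fixes r :: "'s::finite \<Rightarrow> 's \<Rightarrow> real"
  assumes "active r x \<noteq> {}"
  shows "next_state r x e \<in> active r x"
  using assms arg_min_if_finite(1)[of "active r x"] unfolding next_state_def by simp

lemma D_sum:
  fixes r :: "'s::finite \<Rightarrow> 's \<Rightarrow> real"
  assumes rnn: "\<And>z. 0 \<le> r x z" and ne: "active r x \<noteq> {}" and s: "0 \<le> s"
    and h: "\<And>y. 0 \<le> h y"
  shows "(\<integral>\<^sup>+e. ennreal (exp (- s * hold r x e) * h (next_state r x e)) \<partial>Ecl)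
         = ennreal (Rsum r x h / (Rsum r x (\<lambda>_. 1) + s))"
proof -
  let ?A = "active r x"
  let ?q = "\<Sum>z\<in>?A. r x z"
  have "(\<integral>\<^sup>+e. ennreal (exp (- s * hold r x e) * h (next_state r x e)) \<partial>Ecl)
      = (\<integral>\<^sup>+e. (\<Sum>y\<in>?A. ennreal (h y) * (ennreal (exp (- s * hold r x e)) * indicator {e. next_state r x e = y} e)) \<partial>Ecl)"
  proof (rule nn_integral_cong)
    fix e
    have "(\<Sum>y\<in>?A. ennreal (h y) * (ennreal (exp (- s * hold r x e)) * indicator {e. next_state r x e = y} e))
        = (\<Sum>y\<in>?A. if y = next_state r x e then ennreal (h y) * ennreal (exp (- s * hold r x e)) else 0)"
      by (intro sum.cong) (auto split: split_indicator)
    also have "\<dots> = ennreal (h (next_state r x e)) * ennreal (exp (- s * hold r x e))"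
      using next_state_in[OF ne, of e] by (simp add: sum.delta')
    finally show "ennreal (exp (- s * hold r x e) * h (next_state r x e)) = (\<Sum>y\<in>?A. ennreal (h y) * (ennreal (exp (- s * hold r x e)) * indicator {e. next_state r x e = y} e))"
      using h by (simp add: ennreal_mult' mult.commute)
  qed
  also have "\<dots> = (\<Sum>y\<in>?A. ennreal (h y) * (\<integral>\<^sup>+e. ennreal (exp (- s * hold r x e)) * indicator {e. next_state r x e = y} e \<partial>Ecl))"
    by (subst nn_integral_sum) (auto simp: Ecl_def intro!: sum.cong nn_integral_cmult)
  also have "\<dots> = (\<Sum>y\<in>?A. ennreal (h y) * ennreal (r x y / (?q + s)))"
  proof (intro sum.cong refl)
    fix y assume "y \<in> ?A"
    then show "ennreal (h y) * (\<integral>\<^sup>+e. ennreal (exp (- s * hold r x e)) * indicator {e. next_state r x e = y} e \<partial>Ecl) = ennreal (h y) * ennreal (r x y / (?q + s))"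
      using D_one[of r x y s] rnn s by simp
  qed
  also have "\<dots> = ennreal (\<Sum>y\<in>?A. h y * (r x y / (?q + s)))"
  proof -
    have "\<And>y. ennreal (h y) * ennreal (r x y / (?q + s)) = ennreal (h y * (r x y / (?q + s)))"
      using h rnn s by (subst ennreal_mult) (auto intro!: divide_nonneg_nonneg sum_nonneg add_nonneg_nonneg)
    then have "(\<Sum>y\<in>?A. ennreal (h y) * ennreal (r x y / (?q + s))) = (\<Sum>y\<in>?A. ennreal (h y * (r x y / (?q + s))))"
      by (simp only:)
    also have "\<dots> = ennreal (\<Sum>y\<in>?A. h y * (r x y / (?q + s)))"
      using h rnn s by (intro sum_ennreal) (auto intro!: mult_nonneg_nonneg divide_nonneg_nonneg sum_nonneg add_nonneg_nonneg)
    finally show ?thesis .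
  qed
  also have "(\<Sum>y\<in>?A. h y * (r x y / (?q + s))) = Rsum r x h / (Rsum r x (\<lambda>_. 1) + s)"
    unfolding Rsum_active[of r x, OF rnn] by (simp add: sum_divide_distrib mult.commute)
  finally show ?thesis .
qed



lemma measurable_jc[measurable]:
  fixes r :: "'s::finite \<Rightarrow> 's \<Rightarrow> real"
  shows "(\<lambda>\<omega>. jump_chain r x0 \<omega> n) \<in> measurable clock_space (count_space UNIV)"
proof (induction n)
  case 0 then show ?case by simp
next
  case (Suc n)
  have "(\<lambda>\<omega>. (\<lambda>i \<omega>. next_state r i (\<omega> n)) (jump_chain r x0 \<omega> n) \<omega>) \<in> measurable clock_space (count_space UNIV)"
  proof (rule measurable_compose_countable[OF _ Suc])
    fix i
    show "(\<lambda>\<omega>. next_state r i (\<omega> n)) \<in> measurable clock_space (count_space UNIV)"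
      unfolding clock_space_Ecl by (rule measurable_compose[OF _ measurable_next_state]) simp
  qed
  then show ?case by simp
qed

lemma measurable_hold_n[measurable]:
  fixes r :: "'s::finite \<Rightarrow> 's \<Rightarrow> real"
  shows "(\<lambda>\<omega>. hold r i (\<omega> k)) \<in> borel_measurable clock_space"
  unfolding clock_space_Ecl by (rule measurable_compose[OF _ measurable_hold]) simp

lemma measurable_jump_time[measurable]:
  fixes r :: "'s::finite \<Rightarrow> 's \<Rightarrow> real"
  shows "(\<lambda>\<omega>. jump_time r x0 \<omega> n) \<in> borel_measurable clock_space"
  unfolding jump_time_def
proof (rule borel_measurable_sum)
  fix k
  show "(\<lambda>\<omega>. hold r (jump_chain r x0 \<omega> k) (\<omega> k)) \<in> borel_measurable clock_space"
    by (rule measurable_compose_countable[OF measurable_hold_n measurable_jc])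
qed

lemma measurable_hits[measurable]:
  fixes r :: "'s::finite \<Rightarrow> 's \<Rightarrow> real"
  shows "Measurable.pred clock_space (hits r x0 A)"
  unfolding hits_def by measurable

lemma measurable_hit_index[measurable]:
  fixes r :: "'s::finite \<Rightarrow> 's \<Rightarrow> real"
  shows "hit_index r x0 A \<in> measurable clock_space (count_space UNIV)"
  unfolding hit_index_def[abs_def] by measurable

lemma measurable_hit_time[measurable]:
  fixes r :: "'s::finite \<Rightarrow> 's \<Rightarrow> real"
  shows "hit_time r x0 A \<in> borel_measurable clock_space"
  unfolding hit_time_def[abs_def]
  by (rule measurable_compose_countable[OF measurable_jump_time measurable_hit_index])

definition FL :: "('s \<Rightarrow> 's \<Rightarrow> real) \<Rightarrow> 's \<Rightarrow> 's set \<Rightarrow> real \<Rightarrow> (nat \<Rightarrow> 's \<Rightarrow> real) \<Rightarrow> real" where "FL r x A s \<omega> = (if hits r x A \<omega> then exp (- s * hit_time r x A \<omega>) else 0)"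
definition FP :: "('s \<Rightarrow> 's \<Rightarrow> real) \<Rightarrow> 's \<Rightarrow> 's set \<Rightarrow> real \<Rightarrow> (nat \<Rightarrow> 's \<Rightarrow> real) \<Rightarrow> real" where "FP r x A z \<omega> = (if hits r x A \<omega> then z ^ hit_index r x A \<omega> else 0)"

lemma measurable_FL[measurable]:
  fixes r :: "'s::finite \<Rightarrow> 's \<Rightarrow> real"
  shows "FL r x A s \<in> borel_measurable clock_space"
  unfolding FL_def[abs_def] by measurable

lemma measurable_FP[measurable]:
  fixes r :: "'s::finite \<Rightarrow> 's \<Rightarrow> real"
  shows "FP r x A z \<in> borel_measurable clock_space"
  unfolding FP_def[abs_def] by measurable

lemma jc_shift: "jump_chain r x0 (case_nat e \<omega>) (Suc n) = jump_chain r (next_state r x0 e) \<omega> n"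
  by (induction n) auto

lemma hits_shift:
  "x0 \<notin> A \<Longrightarrow> hits r x0 A (case_nat e \<omega>) \<longleftrightarrow> hits r (next_state r x0 e) A \<omega>"
  unfolding hits_def
  by (metis jc_shift jump_chain.simps(1) not0_implies_Suc)

lemma hit_index_shift:
  assumes "x0 \<notin> A" "hits r (next_state r x0 e) A \<omega>"
  shows "hit_index r x0 A (case_nat e \<omega>) = Suc (hit_index r (next_state r x0 e) A \<omega>)"
proof -
  obtain n where "jump_chain r (next_state r x0 e) \<omega> n \<in> A" using assms(2) by (auto simp: hits_def)
  then show ?thesis
    unfolding hit_index_def using assms(1)
    by (subst Least_Suc[where n = "Suc n"]) (auto simp: jc_shift simp del: jump_chain.simps(2))
qed

lemma jump_time_shift:
  "jump_time r x0 (case_nat e \<omega>) (Suc n) = hold r x0 e + jump_time r (next_state r x0 e) \<omega> n"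
  unfolding jump_time_def by (subst sum.lessThan_Suc_shift) (simp add: jc_shift del: jump_chain.simps(2))

lemma FL_shift:
  assumes "x0 \<notin> A"
  shows "FL r x0 A s (case_nat e \<omega>) = exp (- s * hold r x0 e) * FL r (next_state r x0 e) A s \<omega>"
  using assms unfolding FL_def hit_time_def
  by (auto simp: hits_shift hit_index_shift jump_time_shift distrib_left mult_exp_exp)

lemma FP_shift:
  assumes "x0 \<notin> A"
  shows "FP r x0 A z (case_nat e \<omega>) = z * FP r (next_state r x0 e) A z \<omega>"
  using assms unfolding FP_def
  by (auto simp: hits_shift hit_index_shift)

lemma interpret_seq: "sequence_space Ecl"
  unfolding sequence_space_def product_prob_space_def product_prob_space_axioms_def product_sigma_finite_def
  using prob_Ecl by (auto intro: prob_space_imp_sigma_finite)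

lemma nn_shift:
  fixes r :: "'s::finite \<Rightarrow> 's \<Rightarrow> real"
  assumes [measurable]: "G \<in> borel_measurable clock_space"
  shows "(\<integral>\<^sup>+\<omega>. G \<omega> \<partial>clock_space) = (\<integral>\<^sup>+e. (\<integral>\<^sup>+\<omega>. G (case_nat e \<omega>) \<partial>clock_space) \<partial>(Ecl :: ('s \<Rightarrow> real) measure))"
proof -
  interpret SQ: sequence_space "Ecl :: ('s \<Rightarrow> real) measure" by (rule interpret_seq)
  have cs: "clock_space = SQ.S" by (simp add: clock_space_Ecl)
  have Gm: "G \<in> borel_measurable SQ.S" using assms unfolding cs .
  have cm: "(\<lambda>p. case_nat (fst p) (snd p)) \<in> measurable (Ecl \<Otimes>\<^sub>M SQ.S) SQ.S"
    by (rule measurable_case_nat') simp_all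
  have cm': "(\<lambda>(s, \<omega>). case_nat s \<omega>) \<in> measurable (Ecl \<Otimes>\<^sub>M SQ.S) SQ.S"
    using cm by (simp add: split_beta')
  have Gm2: "(\<lambda>p. G (case_nat (fst p) (snd p))) \<in> borel_measurable (Ecl \<Otimes>\<^sub>M SQ.S)"
    using measurable_comp[OF cm Gm] by (simp add: comp_def)
  have "(\<integral>\<^sup>+\<omega>. G \<omega> \<partial>SQ.S) = (\<integral>\<^sup>+\<omega>. G \<omega> \<partial>distr (Ecl \<Otimes>\<^sub>M SQ.S) SQ.S (\<lambda>(s, \<omega>). case_nat s \<omega>))"
    by (simp add: SQ.PiM_iter)
  also have "\<dots> = (\<integral>\<^sup>+p. G (case_nat (fst p) (snd p)) \<partial>(Ecl \<Otimes>\<^sub>M SQ.S))"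
    by (subst nn_integral_distr[OF cm']) (simp_all add: split_beta' Gm)
  also have "\<dots> = (\<integral>\<^sup>+e. (\<integral>\<^sup>+\<omega>. G (case_nat e \<omega>) \<partial>SQ.S) \<partial>Ecl)"
    by (subst SQ.P.nn_integral_fst[symmetric]) (auto simp: Gm2)
  finally show ?thesis unfolding cs .
qed



lemma prob_clock: "prob_space clock_space"
  unfolding clock_space_Ecl by (intro prob_space_PiM prob_Ecl)

lemma AE_Ecl_nonneg: "AE e in (Ecl :: ('s::finite \<Rightarrow> real) measure). \<forall>z. 0 \<le> e z"
proof -
  have "\<forall>z::'s. AE e in Ecl. 0 \<le> e z"
    unfolding Ecl_def
  proof
    fix z :: 's
    show "AE e in PiM UNIV (\<lambda>_. exp1). 0 \<le> e z"
      by (rule AE_PiM_component[where P = "\<lambda>u. 0 \<le> u"]) (auto simp: prob_exp1 AE_exp1_pos)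
  qed
  then show ?thesis by (simp add: AE_all_countable)
qed

lemma AE_clock_nonneg: "AE \<omega> in clock_space. \<forall>n (z::'s::finite). 0 \<le> \<omega> n z"
proof -
  have "\<forall>n. AE \<omega> in clock_space. \<forall>z::'s. 0 \<le> \<omega> n z"
    unfolding clock_space_Ecl
  proof
    fix n :: nat
    show "AE \<omega> in PiM UNIV (\<lambda>_. Ecl). \<forall>z::'s. 0 \<le> \<omega> n z"
      by (rule AE_PiM_component[where P = "\<lambda>e. \<forall>z::'s. 0 \<le> e z"]) (auto simp: prob_Ecl AE_Ecl_nonneg)
  qed
  then show ?thesis by (simp add: AE_all_countable)
qed

lemma hold_nonneg:
  fixes r :: "'s::finite \<Rightarrow> 's \<Rightarrow> real"
  assumes "\<forall>z. 0 \<le> e z" "active r x \<noteq> {}"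
  shows "0 \<le> hold r x e"
  unfolding hold_def using assms
  by (subst Min_ge_iff) (auto simp: active_def intro!: divide_nonneg_pos)

lemma jump_time_nonneg:
  fixes r :: "'s::finite \<Rightarrow> 's \<Rightarrow> real"
  assumes "\<forall>n z. 0 \<le> \<omega> n z" "\<forall>x. active r x \<noteq> {}"
  shows "0 \<le> jump_time r x0 \<omega> n"
  unfolding jump_time_def using assms by (intro sum_nonneg hold_nonneg) auto

lemma HL_nn:
  fixes r :: "'s::finite \<Rightarrow> 's \<Rightarrow> real"
  assumes ne: "\<forall>x. active r x \<noteq> {}" and s: "0 \<le> s"
  shows "(\<integral>\<^sup>+\<omega>. ennreal (FL r x A s \<omega>) \<partial>clock_space) = ennreal (hit_laplace r x A s)"
proof -
  interpret P: prob_space clock_space by (rule prob_clock)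
  have hl: "hit_laplace r x A s = integral\<^sup>L clock_space (FL r x A s)"
    unfolding hit_laplace_def FL_def[abs_def] ..
  have "(\<integral>\<^sup>+\<omega>. ennreal (FL r x A s \<omega>) \<partial>clock_space) \<le> (\<integral>\<^sup>+\<omega>. 1 \<partial>(clock_space :: (nat \<Rightarrow> 's \<Rightarrow> real) measure))"
  proof (rule nn_integral_mono_AE)
    show "AE \<omega> in clock_space. ennreal (FL r x A s \<omega>) \<le> 1"
      using AE_clock_nonneg
    proof eventually_elim
      fix \<omega> :: "nat \<Rightarrow> 's \<Rightarrow> real" assume "\<forall>n z. 0 \<le> \<omega> n z"
      then have "0 \<le> hit_time r x A \<omega>" unfolding hit_time_def using ne by (intro jump_time_nonneg) auto
      then show "ennreal (FL r x A s \<omega>) \<le> 1" using s by (auto simp: FL_def mult_nonneg_nonneg)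
    qed
  qed
  also have "\<dots> = 1" using P.emeasure_space_1 by simp
  finally have fin: "(\<integral>\<^sup>+\<omega>. ennreal (FL r x A s \<omega>) \<partial>clock_space) < \<top>" by (simp add: le_less_trans)
  have "hit_laplace r x A s = enn2real (\<integral>\<^sup>+\<omega>. ennreal (FL r x A s \<omega>) \<partial>clock_space)"
    unfolding hl by (rule integral_eq_nn_integral) (auto simp: FL_def)
  then show ?thesis using fin by simp
qed

lemma HP_nn:
  fixes r :: "'s::finite \<Rightarrow> 's \<Rightarrow> real"
  assumes z: "0 \<le> z" "z \<le> 1"
  shows "(\<integral>\<^sup>+\<omega>. ennreal (FP r x A z \<omega>) \<partial>clock_space) = ennreal (hit_pgf r x A z)"
proof -
  interpret P: prob_space clock_space by (rule prob_clock)
  have hl: "hit_pgf r x A z = integral\<^sup>L clock_space (FP r x A z)"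
    unfolding hit_pgf_def FP_def[abs_def] ..
  have "(\<integral>\<^sup>+\<omega>. ennreal (FP r x A z \<omega>) \<partial>clock_space) \<le> (\<integral>\<^sup>+\<omega>. 1 \<partial>(clock_space :: (nat \<Rightarrow> 's \<Rightarrow> real) measure))"
    using z by (intro nn_integral_mono) (auto simp: FP_def power_le_one)
  also have "\<dots> = 1" using P.emeasure_space_1 by simp
  finally have fin: "(\<integral>\<^sup>+\<omega>. ennreal (FP r x A z \<omega>) \<partial>clock_space) < \<top>" by (simp add: le_less_trans)
  have "hit_pgf r x A z = enn2real (\<integral>\<^sup>+\<omega>. ennreal (FP r x A z \<omega>) \<partial>clock_space)"
    unfolding hl using z by (intro integral_eq_nn_integral) (auto simp: FP_def)
  then show ?thesis using fin by simp
qed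

lemma HL_nonneg: "0 \<le> hit_laplace r x A s"
  unfolding hit_laplace_def by (rule integral_nonneg_AE) auto

lemma HP_nonneg: "0 \<le> z \<Longrightarrow> 0 \<le> hit_pgf r x A z"
  unfolding hit_pgf_def by (rule integral_nonneg_AE) auto

lemma HL_in: "x \<in> A \<Longrightarrow> hit_laplace r x A s = 1"
proof -
  interpret P: prob_space clock_space by (rule prob_clock)
  assume "x \<in> A"
  then have "\<And>\<omega>. hits r x A \<omega>" "\<And>\<omega>. hit_index r x A \<omega> = 0"
    by (auto simp: hits_def hit_index_def intro!: exI[where x=0])
  then show ?thesis unfolding hit_laplace_def hit_time_def by (simp add: jump_time_def P.prob_space)
qed

lemma HP_in: "x \<in> A \<Longrightarrow> hit_pgf r x A z = 1"
proof -
  interpret P: prob_space clock_space by (rule prob_clock)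
  assume "x \<in> A"
  then have "\<And>\<omega>. hits r x A \<omega>" "\<And>\<omega>. hit_index r x A \<omega> = 0"
    by (auto simp: hits_def hit_index_def intro!: exI[where x=0])
  then show ?thesis unfolding hit_pgf_def by (simp add: P.prob_space)
qed

lemma HL_step:
  fixes r :: "'s::finite \<Rightarrow> 's \<Rightarrow> real"
  assumes rnn: "\<And>x y. 0 \<le> r x y" and ne: "\<forall>x. active r x \<noteq> {}" and s: "0 \<le> s" and xA: "x \<notin> A"
  shows "hit_laplace r x A s = Rsum r x (\<lambda>y. hit_laplace r y A s) / (Rsum r x (\<lambda>_. 1) + s)"
proof -
  let ?H = "\<lambda>y. hit_laplace r y A s"
  have "ennreal (?H x) = (\<integral>\<^sup>+\<omega>. ennreal (FL r x A s \<omega>) \<partial>clock_space)"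
    by (rule HL_nn[OF ne s, symmetric])
  also have "\<dots> = (\<integral>\<^sup>+e. (\<integral>\<^sup>+\<omega>. ennreal (FL r x A s (case_nat e \<omega>)) \<partial>clock_space) \<partial>(Ecl :: ('s \<Rightarrow> real) measure))"
    by (rule nn_shift) simp
  also have "\<dots> = (\<integral>\<^sup>+e. ennreal (exp (- s * hold r x e)) * (\<integral>\<^sup>+\<omega>. ennreal (FL r (next_state r x e) A s \<omega>) \<partial>clock_space) \<partial>Ecl)"
    by (intro nn_integral_cong) (simp add: FL_shift[OF xA] ennreal_mult' nn_integral_cmult)
  also have "\<dots> = (\<integral>\<^sup>+e. ennreal (exp (- s * hold r x e) * ?H (next_state r x e)) \<partial>Ecl)"
    by (intro nn_integral_cong) (simp add: HL_nn[OF ne s] ennreal_mult')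
  also have "\<dots> = ennreal (Rsum r x ?H / (Rsum r x (\<lambda>_. 1) + s))"
    using ne s by (intro D_sum rnn HL_nonneg) auto
  finally have eq: "ennreal (?H x) = ennreal (Rsum r x ?H / (Rsum r x (\<lambda>_. 1) + s))" .
  have "0 \<le> Rsum r x ?H" "0 \<le> Rsum r x (\<lambda>_. 1)"
    unfolding Rsum_def by (auto intro!: sum_nonneg mult_nonneg_nonneg rnn HL_nonneg)
  then show ?thesis
    using eq HL_nonneg s by (subst (asm) ennreal_inj) (auto intro!: divide_nonneg_nonneg add_nonneg_nonneg)
qed

lemma HP_step:
  fixes r :: "'s::finite \<Rightarrow> 's \<Rightarrow> real"
  assumes rnn: "\<And>x y. 0 \<le> r x y" and ne: "\<forall>x. active r x \<noteq> {}" and z: "0 \<le> z" "z \<le> 1" and xA: "x \<notin> A"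
  shows "hit_pgf r x A z = z * (Rsum r x (\<lambda>y. hit_pgf r y A z) / Rsum r x (\<lambda>_. 1))"
proof -
  let ?H = "\<lambda>y. hit_pgf r y A z"
  have R0: "0 \<le> Rsum r x ?H" "0 \<le> Rsum r x (\<lambda>_. 1)"
    unfolding Rsum_def using z by (auto intro!: sum_nonneg mult_nonneg_nonneg rnn HP_nonneg)
  have "ennreal (?H x) = (\<integral>\<^sup>+\<omega>. ennreal (FP r x A z \<omega>) \<partial>clock_space)"
    by (rule HP_nn[OF z, symmetric])
  also have "\<dots> = (\<integral>\<^sup>+e. (\<integral>\<^sup>+\<omega>. ennreal (FP r x A z (case_nat e \<omega>)) \<partial>clock_space) \<partial>(Ecl :: ('s \<Rightarrow> real) measure))"
    by (rule nn_shift) simp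
  also have "\<dots> = (\<integral>\<^sup>+e. ennreal z * (\<integral>\<^sup>+\<omega>. ennreal (FP r (next_state r x e) A z \<omega>) \<partial>clock_space) \<partial>Ecl)"
    by (intro nn_integral_cong) (simp add: FP_shift[OF xA] ennreal_mult' nn_integral_cmult z)
  also have "\<dots> = ennreal z * (\<integral>\<^sup>+e. ennreal (exp (- 0 * hold r x e) * ?H (next_state r x e)) \<partial>Ecl)"
    by (subst nn_integral_cmult[symmetric]) (auto simp: HP_nn[OF z] Ecl_def)
  also have "\<dots> = ennreal z * ennreal (Rsum r x ?H / (Rsum r x (\<lambda>_. 1) + 0))"
    using ne z by (subst D_sum) (auto intro!: rnn HP_nonneg)
  also have "\<dots> = ennreal (z * (Rsum r x ?H / Rsum r x (\<lambda>_. 1)))"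
    using z R0 by (subst ennreal_mult[symmetric]) auto
  finally show ?thesis
    using HP_nonneg[OF z(1)] z R0 by (subst (asm) ennreal_inj) (auto intro!: mult_nonneg_nonneg divide_nonneg_nonneg)
qed



lemma uniq:
  fixes r :: "'s::finite \<Rightarrow> 's \<Rightarrow> real"
  assumes rnn: "\<And>x y. 0 \<le> r x y"
    and cl: "\<And>x y. x \<in> S - A \<Longrightarrow> y \<noteq> x \<Longrightarrow> r x y \<noteq> 0 \<Longrightarrow> y \<in> S"
    and bA: "\<And>x. x \<in> S \<inter> A \<Longrightarrow> f1 x = f2 x"
    and e1: "\<And>x. x \<in> S - A \<Longrightarrow> f1 x = c x * Rsum r x f1"
    and e2: "\<And>x. x \<in> S - A \<Longrightarrow> f2 x = c x * Rsum r x f2"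
    and c: "\<And>x. x \<in> S - A \<Longrightarrow> 0 \<le> c x \<and> c x * Rsum r x (\<lambda>_. 1) < 1"
  shows "\<forall>x\<in>S. f1 x = f2 x"
proof (rule ccontr)
  assume "\<not> (\<forall>x\<in>S. f1 x = f2 x)"
  then have Sne: "S \<noteq> {}" by auto
  define d where "d x = \<bar>f1 x - f2 x\<bar>" for x
  define m where "m = Max (d ` S)"
  have "m \<in> d ` S" unfolding m_def using Sne by (intro Max_in) auto
  then obtain x0 where x0: "x0 \<in> S" "d x0 = m" by auto
  have dm: "\<And>x. x \<in> S \<Longrightarrow> d x \<le> m" unfolding m_def by simp
  have "m > 0"
  proof -
    obtain x where "x \<in> S" "f1 x \<noteq> f2 x" using \<open>\<not> (\<forall>x\<in>S. f1 x = f2 x)\<close> by auto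
    then have "0 < d x" by (simp add: d_def)
    then show ?thesis using dm[OF \<open>x \<in> S\<close>] by simp
  qed
  have x0A: "x0 \<notin> A" using bA x0 \<open>m > 0\<close> by (auto simp: d_def)
  have Rd: "Rsum r x0 (\<lambda>y. f1 y - f2 y) = Rsum r x0 f1 - Rsum r x0 f2"
    unfolding Rsum_def by (subst sum_subtractf[symmetric]) (rule sum.cong, auto simp: right_diff_distrib)
  have "f1 x0 - f2 x0 = c x0 * Rsum r x0 (\<lambda>y. f1 y - f2 y)"
    using e1[of x0] e2[of x0] x0 x0A unfolding Rd by (simp add: right_diff_distrib)
  then have "d x0 = c x0 * \<bar>Rsum r x0 (\<lambda>y. f1 y - f2 y)\<bar>"
    using c[of x0] x0 x0A by (simp add: d_def abs_mult)
  also have "\<bar>Rsum r x0 (\<lambda>y. f1 y - f2 y)\<bar> \<le> Rsum r x0 (\<lambda>_. m)"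
    unfolding Rsum_def
  proof (rule order.trans[OF sum_abs], rule sum_mono)
    fix y :: 's
    show "\<bar>if y = x0 then 0 else r x0 y * (f1 y - f2 y)\<bar> \<le> (if y = x0 then 0 else r x0 y * m)"
    proof (cases "y = x0 \<or> r x0 y = 0")
      case True then show ?thesis by auto
    next
      case False
      then have "y \<in> S" using cl[of x0 y] x0 x0A by auto
      then have "\<bar>f1 y - f2 y\<bar> \<le> m" using dm d_def by auto
      then show ?thesis using False rnn[of x0 y] by (auto simp: abs_mult intro: mult_left_mono)
    qed
  qed
  then have "c x0 * \<bar>Rsum r x0 (\<lambda>y. f1 y - f2 y)\<bar> \<le> c x0 * Rsum r x0 (\<lambda>_. m)"
    using c[of x0] x0 x0A by (intro mult_left_mono) auto
  also have "Rsum r x0 (\<lambda>_. m) = Rsum r x0 (\<lambda>_. 1) * m"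
    unfolding Rsum_def sum_distrib_right by (rule sum.cong) auto
  also have "c x0 * (Rsum r x0 (\<lambda>_. 1) * m) < m"
    using c[of x0] x0 x0A \<open>m > 0\<close> by (simp add: mult.assoc[symmetric])
  finally show False using x0 by simp
qed

lemma sum_delta_ne:
  "(\<Sum>y\<in>(UNIV::'s::finite set). if y = a \<and> y \<noteq> x then f y else 0) = (if a = x then 0 else f a)"
proof -
  have "(\<Sum>y\<in>(UNIV::'s set). if y = a \<and> y \<noteq> x then f y else 0) = (\<Sum>y\<in>UNIV. if y = a then (if a = x then 0 else f a) else 0)"
    by (rule sum.cong) auto
  then show ?thesis by simp
qed

definition Rs :: "'s::finite \<Rightarrow> ('s \<Rightarrow> real) \<Rightarrow> ('s \<Rightarrow> real) \<Rightarrow> real" where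
  "Rs x h \<rho> = (\<Sum>y\<in>UNIV. if y = x then 0 else \<rho> y * h y)"

lemma Rsum_Rs: "Rsum r x h = Rs x h (r x)"
  unfolding Rsum_def Rs_def ..

lemma Rs_add: "Rs x h (\<lambda>y. f y + g y) = Rs x h f + Rs x h g"
  unfolding Rs_def by (simp add: sum.distrib[symmetric] distrib_right if_distrib cong: if_cong)

lemma Rs_fam:
  "finite W \<Longrightarrow> Rs x h (\<lambda>y. \<Sum>w\<in>W. if y = t w then c w else 0) = (\<Sum>w\<in>W. if t w = x then 0 else c w * h (t w))"
  unfolding Rs_def
proof -
  have "(\<Sum>y\<in>UNIV. if y = x then 0 else (\<Sum>w\<in>W. if y = t w then c w else 0) * h y)
      = (\<Sum>y\<in>UNIV. \<Sum>w\<in>W. if y = t w \<and> y \<noteq> x then c w * h y else 0)"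
    by (intro sum.cong refl) (auto simp: sum_distrib_right intro!: sum.cong)
  also have "\<dots> = (\<Sum>w\<in>W. \<Sum>y\<in>UNIV. if y = t w \<and> y \<noteq> x then c w * h y else 0)"
    by (rule sum.swap)
  also have "\<dots> = (\<Sum>w\<in>W. if t w = x then 0 else c w * h (t w))"
    by (intro sum.cong refl) (rule sum_delta_ne)
  finally show "(\<Sum>y\<in>UNIV. if y = x then 0 else (\<Sum>w\<in>W. if y = t w then c w else 0) * h y) = (\<Sum>w\<in>W. if t w = x then 0 else c w * h (t w))" .
qed

lemma Rs_single:
  "Rs x h (\<lambda>y. if P \<and> y = t then c else 0) = (if P \<and> t \<noteq> x then c * h t else 0)"
proof -
  have "Rs x h (\<lambda>y. if P \<and> y = t then c else 0) = (\<Sum>y\<in>UNIV. if y = t \<and> y \<noteq> x then (if P then c * h y else 0) else 0)"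
    unfolding Rs_def by (rule sum.cong) auto
  then show ?thesis by (simp add: sum_delta_ne)
qed

lemma active_ne_of_Rsum:
  fixes r :: "'s::finite \<Rightarrow> 's \<Rightarrow> real"
  assumes rnn: "\<And>y. 0 \<le> r x y" and pos: "0 < Rsum r x (\<lambda>_. 1)"
  shows "active r x \<noteq> {}"
proof
  assume "active r x = {}"
  have "\<And>y. y \<noteq> x \<Longrightarrow> r x y = 0"
  proof -
    fix y assume "y \<noteq> x"
    then have "\<not> 0 < r x y" using \<open>active r x = {}\<close> by (auto simp: active_def)
    then show "r x y = 0" using rnn[of y] by linarith
  qed
  then have "Rsum r x (\<lambda>_. 1) = 0" unfolding Rsum_def by (intro sum.neutral) auto
  then show False using pos by simp
qed



locale setting =
  fixes Adj :: "'v::finite \<Rightarrow> 'v \<Rightarrow> bool" and lam :: real and u v :: 'v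
  assumes sg: "simple_graph Adj" and conn: "graph_connected Adj" and et: "edge_transitive Adj"
    and uv: "Adj u v" and lam: "lam > 0"
begin

lemma sym: "Adj a b \<Longrightarrow> Adj b a" using sg by (auto simp: simple_graph_def)
lemma irr: "\<not> Adj a a" using sg by (auto simp: simple_graph_def)

lemma nbr_ne: "nbrs Adj p \<noteq> {}"
proof -
  have "u \<noteq> v" using uv irr by auto
  then obtain q where "q \<noteq> p" by metis
  have "Adj\<^sup>*\<^sup>* p q" using conn by (simp add: graph_connected_def)
  then show ?thesis using \<open>q \<noteq> p\<close>
    by (cases rule: converse_rtranclpE) (auto simp: nbrs_def)
qed

lemma deg_pos: "0 < deg Adj p"
  unfolding deg_def using nbr_ne[of p] by (simp add: card_gt_0_iff)

lemma nbrs_ne_self: "w \<in> nbrs Adj p \<Longrightarrow> w \<noteq> p"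
  using irr by (auto simp: nbrs_def)

definition Wk :: "('v \<times> 'v \<Rightarrow> real) \<Rightarrow> 'v \<Rightarrow> 'v \<Rightarrow> real" where
  "Wk h p1 p2 = (\<Sum>w\<in>nbrs Adj p1. lam / real (deg Adj p1) * h (w, p2))
              + (\<Sum>w\<in>nbrs Adj p2. lam / real (deg Adj p2) * h (p1, w))"

lemma walk_rnn: "0 \<le> walk_rate Adj lam x y"
  unfolding walk_rate_def using lam by (auto split: prod.split intro!: add_nonneg_nonneg sum_nonneg)

lemma walk_Rsum: "Rsum (walk_rate Adj lam) (p1, p2) h = Wk h p1 p2"
proof -
  have r: "walk_rate Adj lam (p1, p2) = (\<lambda>y. (\<Sum>w\<in>nbrs Adj p1. if y = (w, p2) then lam / real (deg Adj p1) else 0)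
        + (\<Sum>w\<in>nbrs Adj p2. if y = (p1, w) then lam / real (deg Adj p2) else 0))"
    unfolding walk_rate_def by simp
  show ?thesis
    unfolding Rsum_Rs r Rs_add
    apply (subst Rs_fam, simp)+
    unfolding Wk_def
    apply (intro arg_cong2[where f = "(+)"] sum.cong refl)
     apply (auto dest: nbrs_ne_self)
    done
qed

lemma Wk_const: "Wk (\<lambda>_. c) p1 p2 = 2 * lam * c"
  unfolding Wk_def using deg_pos[of p1] deg_pos[of p2] by (simp add: deg_def[symmetric])

lemma Wk_add: "Wk (\<lambda>y. f y + g y) p1 p2 = Wk f p1 p2 + Wk g p1 p2"
  unfolding Wk_def by (simp add: distrib_left sum.distrib)

lemma Wk_cmult: "Wk (\<lambda>y. c * f y) p1 p2 = c * Wk f p1 p2"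
  unfolding Wk_def by (simp add: distrib_left sum_distrib_left mult.left_commute)

lemma Wk_diff: "Wk (\<lambda>y. f y - g y) p1 p2 = Wk f p1 p2 - Wk g p1 p2"
  unfolding Wk_def by (simp add: right_diff_distrib sum_subtractf)

lemma walk_ne: "\<forall>x. active (walk_rate Adj lam) x \<noteq> {}"
proof
  fix x :: "'v \<times> 'v"
  obtain p1 p2 where x: "x = (p1, p2)" by fastforce
  show "active (walk_rate Adj lam) x \<noteq> {}"
    using lam by (intro active_ne_of_Rsum walk_rnn) (simp add: x walk_Rsum Wk_const)
qed

definition g :: "real \<Rightarrow> 'v \<times> 'v \<Rightarrow> real" where
  "g z p = hit_pgf (walk_rate Adj lam) p meet_set z"

lemma g_diag: "g z (p, p) = 1"
  unfolding g_def by (rule HP_in) (simp add: meet_set_def)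

lemma g_eq:
  assumes "0 \<le> z" "z \<le> 1" "p1 \<noteq> p2"
  shows "g z (p1, p2) = z * Wk (g z) p1 p2 / (2 * lam)"
  unfolding g_def using assms
  by (subst HP_step[OF walk_rnn walk_ne]) (auto simp: meet_set_def walk_Rsum Wk_const g_def[abs_def])

lemma g_nonneg: "0 \<le> z \<Longrightarrow> 0 \<le> g z p"
  unfolding g_def by (rule HP_nonneg)

lemma g_uniq:
  assumes z: "0 \<le> z" "z < 1"
    and fd: "\<And>p. f (p, p) = 1"
    and fe: "\<And>p1 p2. p1 \<noteq> p2 \<Longrightarrow> f (p1, p2) = z * Wk f p1 p2 / (2 * lam)"
  shows "f = g z"
proof -
  have "\<forall>x\<in>UNIV. f x = g z x"
  proof (rule uniq[where r = "walk_rate Adj lam" and A = meet_set and c = "\<lambda>_. z / (2 * lam)"])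
    show "\<And>x y. 0 \<le> walk_rate Adj lam x y" by (rule walk_rnn)
    show "\<And>x. x \<in> UNIV \<inter> meet_set \<Longrightarrow> f x = g z x"
      by (auto simp: meet_set_def fd g_diag)
    show "\<And>x. x \<in> UNIV - meet_set \<Longrightarrow> f x = z / (2 * lam) * Rsum (walk_rate Adj lam) x f"
      by (auto simp: meet_set_def walk_Rsum fe)
    show "\<And>x. x \<in> UNIV - meet_set \<Longrightarrow> g z x = z / (2 * lam) * Rsum (walk_rate Adj lam) x (g z)"
      using z by (auto simp: meet_set_def walk_Rsum g_eq)
    show "\<And>x. x \<in> UNIV - meet_set \<Longrightarrow> 0 \<le> z / (2 * lam) \<and> z / (2 * lam) * Rsum (walk_rate Adj lam) x (\<lambda>_. 1) < 1"
      using z lam by (auto simp: walk_Rsum Wk_const)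
  qed auto
  then show ?thesis by auto
qed

lemma g_swap:
  assumes z: "0 \<le> z" "z < 1"
  shows "g z (p2, p1) = g z (p1, p2)"
proof -
  have "(\<lambda>(a, b). g z (b, a)) = g z"
  proof (rule g_uniq[OF z])
    show "\<And>p. (case (p, p) of (a, b) \<Rightarrow> g z (b, a)) = 1" by (simp add: g_diag)
    fix p1 p2 :: 'v assume "p1 \<noteq> p2"
    then show "(case (p1, p2) of (a, b) \<Rightarrow> g z (b, a)) = z * Wk (\<lambda>(a, b). g z (b, a)) p1 p2 / (2 * lam)"
      using z by (simp add: g_eq Wk_def add.commute)
  qed
  then show ?thesis by (metis case_prod_conv)
qed

lemma g_auto:
  assumes z: "0 \<le> z" "z < 1" and \<sigma>: "graph_automorphism Adj \<sigma>"
  shows "g z (\<sigma> p1, \<sigma> p2) = g z (p1, p2)"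
proof -
  have bij: "bij \<sigma>" and adj: "\<And>x y. Adj (\<sigma> x) (\<sigma> y) \<longleftrightarrow> Adj x y"
    using \<sigma> by (auto simp: graph_automorphism_def)
  have inj: "inj \<sigma>" using bij by (simp add: bij_is_inj)
  have nb: "\<And>p. nbrs Adj (\<sigma> p) = \<sigma> ` nbrs Adj p"
  proof -
    fix p
    show "nbrs Adj (\<sigma> p) = \<sigma> ` nbrs Adj p"
    proof (rule set_eqI)
      fix w
      obtain w' where w': "w = \<sigma> w'" using bij by (metis bij_pointE)
      show "w \<in> nbrs Adj (\<sigma> p) \<longleftrightarrow> w \<in> \<sigma> ` nbrs Adj p"
        using inj by (auto simp: nbrs_def w' adj inj_eq)
    qed
  qed
  have dg: "\<And>p. deg Adj (\<sigma> p) = deg Adj p"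
    unfolding deg_def nb using inj by (simp add: card_image inj_on_subset)
  have "(\<lambda>(a, b). g z (\<sigma> a, \<sigma> b)) = g z"
  proof (rule g_uniq[OF z])
    show "\<And>p. (case (p, p) of (a, b) \<Rightarrow> g z (\<sigma> a, \<sigma> b)) = 1" by (simp add: g_diag)
    fix p1 p2 :: 'v assume "p1 \<noteq> p2"
    then have "\<sigma> p1 \<noteq> \<sigma> p2" using inj by (auto simp: inj_eq)
    then show "(case (p1, p2) of (a, b) \<Rightarrow> g z (\<sigma> a, \<sigma> b)) = z * Wk (\<lambda>(a, b). g z (\<sigma> a, \<sigma> b)) p1 p2 / (2 * lam)"
      using z inj by (simp add: g_eq Wk_def nb dg sum.reindex inj_on_subset)
  qed
  then show ?thesis by (metis case_prod_conv)
qed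

lemma g_edge:
  assumes z: "0 \<le> z" "z < 1" and ab: "Adj a b"
  shows "g z (a, b) = g z (u, v)"
proof -
  obtain \<sigma> where \<sigma>: "graph_automorphism Adj \<sigma>" "{\<sigma> a, \<sigma> b} = {u, v}"
    using et ab uv unfolding edge_transitive_def by blast
  have "u \<noteq> v" using uv irr by auto
  then have "(\<sigma> a = u \<and> \<sigma> b = v) \<or> (\<sigma> a = v \<and> \<sigma> b = u)"
    using \<sigma>(2) by (auto simp: doubleton_eq_iff)
  then show ?thesis
    using g_auto[OF z \<sigma>(1), of a b] g_swap[OF z, of u v] by auto
qed

end



lemma pgf_comb_le:
  fixes r :: "'s::finite \<Rightarrow> 's \<Rightarrow> real"
  assumes z: "0 \<le> z1" "z1 \<le> 1" "z1^2 \<le> z2" "z2 \<le> 1"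
  shows "2 * hit_pgf r x A z1 - hit_pgf r x A z2 \<le> 1"
proof -
  interpret P: prob_space clock_space by (rule prob_clock)
  have z2: "0 \<le> z2" using z by (meson order.trans zero_le_power2)
  have int: "\<And>z. 0 \<le> z \<Longrightarrow> z \<le> 1 \<Longrightarrow> integrable clock_space (FP r x A z)"
    by (rule P.integrable_const_bound[where B = 1]) (auto simp: FP_def power_le_one)
  have "2 * hit_pgf r x A z1 - hit_pgf r x A z2 = integral\<^sup>L clock_space (\<lambda>\<omega>. 2 * FP r x A z1 \<omega> - FP r x A z2 \<omega>)"
    unfolding hit_pgf_def FP_def[symmetric]
    using int[OF z(1,2)] int[OF z2 z(4)] by simp
  also have "\<dots> \<le> integral\<^sup>L (clock_space :: (nat \<Rightarrow> 's \<Rightarrow> real) measure) (\<lambda>_. 1)"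
  proof (rule integral_mono)
    show "integrable clock_space (\<lambda>\<omega>. 2 * FP r x A z1 \<omega> - FP r x A z2 \<omega>)"
      using int[OF z(1,2)] int[OF z2 z(4)] by simp
    fix \<omega>
    show "2 * FP r x A z1 \<omega> - FP r x A z2 \<omega> \<le> 1"
    proof (cases "hits r x A \<omega>")
      case True
      define n where "n = hit_index r x A \<omega>"
      have "(z1 ^ n)^2 \<le> z2 ^ n"
      proof -
        have "(z1 ^ n)^2 = (z1^2) ^ n" by (metis power_mult mult.commute)
        also have "\<dots> \<le> z2 ^ n" using z by (intro power_mono) auto
        finally show ?thesis .
      qed
      moreover have "2 * z1 ^ n - (z1 ^ n)^2 \<le> 1"
      proof -
        have "2 * a - a^2 \<le> 1" for a :: real
          using zero_le_power2[of "a - 1"] unfolding power2_diff by simp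
        then show ?thesis .
      qed
      ultimately show ?thesis using True by (simp add: FP_def n_def[symmetric])
    next
      case False then show ?thesis by (simp add: FP_def)
    qed
  qed simp
  also have "\<dots> = 1" by (simp add: P.prob_space)
  finally show ?thesis .
qed

lemma contact_simps: "contact (a, b, i, j) = (if a = b \<and> (i \<or> j) then (a, b, True, True) else (a, b, i, j))"
  by (simp add: contact_def)

lemma contact_idem: "contact (contact y) = contact y"
  by (cases y) (auto simp: contact_simps)

locale sis_setting = setting +
  fixes gam s :: real
  assumes gam: "gam > 0" and s: "s > 0"
begin

abbreviation "R \<equiv> sis_rate Adj lam gam"

lemma sis_rnn: "0 \<le> R x y"
  unfolding sis_rate_def using lam gam
  by (auto split: prod.split intro!: add_nonneg_nonneg sum_nonneg)

lemma sis_Rsum: "Rsum R (p1, p2, i1, i2) h =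
    (\<Sum>w\<in>nbrs Adj p1. lam / real (deg Adj p1) * h (contact (w, p2, i1, i2)))
  + (\<Sum>w\<in>nbrs Adj p2. lam / real (deg Adj p2) * h (contact (p1, w, i1, i2)))
  + (if i1 \<and> contact (p1, p2, False, i2) \<noteq> (p1, p2, i1, i2) then gam * h (contact (p1, p2, False, i2)) else 0)
  + (if i2 \<and> contact (p1, p2, i1, False) \<noteq> (p1, p2, i1, i2) then gam * h (contact (p1, p2, i1, False)) else 0)"
proof -
  have r: "R (p1, p2, i1, i2) = (\<lambda>y. (\<Sum>w\<in>nbrs Adj p1. if y = contact (w, p2, i1, i2) then lam / real (deg Adj p1) else 0)
        + (\<Sum>w\<in>nbrs Adj p2. if y = contact (p1, w, i1, i2) then lam / real (deg Adj p2) else 0)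
        + (if i1 \<and> y = contact (p1, p2, False, i2) then gam else 0)
        + (if i2 \<and> y = contact (p1, p2, i1, False) then gam else 0))"
    unfolding sis_rate_def by simp
  have m1: "\<And>w. w \<in> nbrs Adj p1 \<Longrightarrow> contact (w, p2, i1, i2) \<noteq> (p1, p2, i1, i2)"
    using nbrs_ne_self by (auto simp: contact_simps)
  have m2: "\<And>w. w \<in> nbrs Adj p2 \<Longrightarrow> contact (p1, w, i1, i2) \<noteq> (p1, p2, i1, i2)"
    using nbrs_ne_self by (auto simp: contact_simps)
  show ?thesis
    unfolding Rsum_Rs r Rs_add Rs_single
    by (subst Rs_fam, simp)+ (auto simp: m1 m2 intro!: sum.cong)
qed

lemma sis_Rsum1: "Rsum R x (\<lambda>_. 1) \<ge> 2 * lam"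
proof -
  obtain p1 p2 i1 i2 where x: "x = (p1, p2, i1, i2)" by (cases x) auto
  have "(\<Sum>w\<in>nbrs Adj p1. lam / real (deg Adj p1) * 1) + (\<Sum>w\<in>nbrs Adj p2. lam / real (deg Adj p2) * 1) = 2 * lam"
    using deg_pos[of p1] deg_pos[of p2] by (simp add: deg_def[symmetric])
  then show ?thesis unfolding x sis_Rsum using gam by auto
qed

lemma sis_ne: "\<forall>x. active R x \<noteq> {}"
proof
  fix x
  show "active R x \<noteq> {}"
  proof (rule active_ne_of_Rsum[OF sis_rnn])
    show "0 < Rsum R x (\<lambda>_. 1)" using sis_Rsum1[of x] lam by linarith
  qed
qed

lemma sis_target: "R x y \<noteq> 0 \<Longrightarrow> \<exists>z. y = contact z"
proof (rule ccontr)
  assume "R x y \<noteq> 0" and H: "\<not> (\<exists>z. y = contact z)"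
  then have H': "\<And>z. (y = contact z) = False" by auto
  have "R x y = 0" unfolding sis_rate_def by (cases x) (simp add: H')
  then show False using \<open>R x y \<noteq> 0\<close> by simp
qed

definition z1 :: real where "z1 = 2 * lam / (2 * lam + s + gam)"
definition z2 :: real where "z2 = 2 * lam / (2 * lam + s + 2 * gam)"

lemma z1: "0 < z1" "z1 < 1" using lam gam s by (auto simp: z1_def)
lemma z2: "0 < z2" "z2 < 1" using lam gam s by (auto simp: z2_def)

definition L0 :: real where "L0 = (2 * gam * ((1 - g z1 (u, v)) / (s + gam) - (1 - g z2 (u, v)) / (s + 2 * gam)))
    / ((2 * lam + s) / (2 * lam) - 2 * g z1 (u, v) + g z2 (u, v))"

definition Mf where "Mf p = 2 * gam * ((1 - g z1 p) / (s + gam) - (1 - g z2 p) / (s + 2 * gam)) + (2 * g z1 p - g z2 p) * L0"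
definition Kf where "Kf p = gam * (1 - g z1 p) / (s + gam) + g z1 p * L0"

definition C where
  "C y = (case y of (a, b, i, j) \<Rightarrow> if \<not> i \<and> \<not> j then 1 else if i \<and> j then Mf (a, b) else Kf (a, b))"

lemma Mf_diag: "Mf (p, p) = L0" by (simp add: Mf_def g_diag)
lemma Kf_diag: "Kf (p, p) = L0" by (simp add: Kf_def g_diag)

lemma C_contact: "C (contact y) = C y"
  by (cases y) (auto simp: contact_simps C_def Mf_diag Kf_diag)

lemma moves_Wk:
  "(\<Sum>w\<in>nbrs Adj p1. lam / real (deg Adj p1) * C (contact (w, p2, i1, i2)))
  + (\<Sum>w\<in>nbrs Adj p2. lam / real (deg Adj p2) * C (contact (p1, w, i1, i2)))
  = Wk (\<lambda>q. C (fst q, snd q, i1, i2)) p1 p2"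
  unfolding Wk_def C_contact by simp

lemma Wk_gen:
  assumes "p1 \<noteq> p2" "0 < z" "z < 1" "z * K = 2 * lam"
  shows "Wk (g z) p1 p2 = K * g z (p1, p2)"
proof -
  have e: "g z (p1, p2) * (2 * lam) = z * Wk (g z) p1 p2"
    using g_eq[of z p1 p2] assms lam by simp
  have "2 * lam * Wk (g z) p1 p2 = K * (z * Wk (g z) p1 p2)"
    using assms(4) by (simp add: mult.assoc[symmetric] mult.commute)
  also have "\<dots> = 2 * lam * (K * g z (p1, p2))" unfolding e[symmetric] by simp
  finally show ?thesis using lam by simp
qed

lemma Wk_g1: "p1 \<noteq> p2 \<Longrightarrow> Wk (g z1) p1 p2 = (2 * lam + s + gam) * g z1 (p1, p2)"
  by (rule Wk_gen) (use z1 lam gam s in \<open>auto simp: z1_def\<close>)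
lemma Wk_g2: "p1 \<noteq> p2 \<Longrightarrow> Wk (g z2) p1 p2 = (2 * lam + s + 2 * gam) * g z2 (p1, p2)"
  by (rule Wk_gen) (use z2 lam gam s in \<open>auto simp: z2_def\<close>)

lemma Wk_lin: "Wk (\<lambda>q. a0 + a1 * f q + a2 * h q) p1 p2 = 2 * lam * a0 + a1 * Wk f p1 p2 + a2 * Wk h p1 p2"
  unfolding Wk_def using deg_pos[of p1] deg_pos[of p2]
  by (simp add: distrib_left sum.distrib sum_distrib_left deg_def[symmetric] algebra_simps)

lemma Mf_lin: "Mf = (\<lambda>q. (2 * gam / (s + gam) - 2 * gam / (s + 2 * gam)) + (2 * L0 - 2 * gam / (s + gam)) * g z1 q + (2 * gam / (s + 2 * gam) - L0) * g z2 q)"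
proof
  fix q
  have n: "s + gam \<noteq> 0" "s + 2 * gam \<noteq> 0" using gam s by auto
  show "Mf q = (2 * gam / (s + gam) - 2 * gam / (s + 2 * gam)) + (2 * L0 - 2 * gam / (s + gam)) * g z1 q + (2 * gam / (s + 2 * gam) - L0) * g z2 q"
    unfolding Mf_def divide_inverse by algebra
qed

lemma Kf_lin: "Kf = (\<lambda>q. gam / (s + gam) + (L0 - gam / (s + gam)) * g z1 q + 0 * g z2 q)"
proof
  fix q
  have n: "s + gam \<noteq> 0" using gam s by auto
  show "Kf q = gam / (s + gam) + (L0 - gam / (s + gam)) * g z1 q + 0 * g z2 q"
    unfolding Kf_def divide_inverse by algebra
qed

lemma eq_TT:
  assumes "p1 \<noteq> p2"
  shows "Mf (p1, p2) * (2 * lam + 2 * gam + s) = Wk Mf p1 p2 + 2 * gam * Kf (p1, p2)"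
proof -
  have "Wk Mf p1 p2 = 2 * lam * (2 * gam / (s + gam) - 2 * gam / (s + 2 * gam)) + (2 * L0 - 2 * gam / (s + gam)) * ((2 * lam + s + gam) * g z1 (p1, p2)) + (2 * gam / (s + 2 * gam) - L0) * ((2 * lam + s + 2 * gam) * g z2 (p1, p2))"
    by (subst Mf_lin, subst Wk_lin) (simp add: Wk_g1[OF assms] Wk_g2[OF assms])
  moreover have "inverse (s + gam) * (s + gam) = 1" "inverse (s + 2 * gam) * (s + 2 * gam) = 1"
    using gam s by auto
  ultimately show ?thesis
    unfolding Mf_def Kf_def divide_inverse by algebra
qed

lemma eq_K:
  assumes "p1 \<noteq> p2"
  shows "Kf (p1, p2) * (2 * lam + gam + s) = Wk Kf p1 p2 + gam"
proof -
  have "Wk Kf p1 p2 = 2 * lam * (gam / (s + gam)) + (L0 - gam / (s + gam)) * ((2 * lam + s + gam) * g z1 (p1, p2)) + 0 * ((2 * lam + s + 2 * gam) * g z2 (p1, p2))"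
    by (subst Kf_lin, subst Wk_lin) (simp add: Wk_g1[OF assms] Wk_g2[OF assms])
  moreover have "inverse (s + gam) * (s + gam) = 1"
    using gam s by auto
  ultimately show ?thesis
    unfolding Kf_def divide_inverse by algebra
qed

lemma D_pos: "0 < (2 * lam + s) / (2 * lam) - 2 * g z1 (u, v) + g z2 (u, v)"
proof -
  have "z1^2 \<le> z2"
  proof -
    have "(2 * lam) * (2 * lam + s + 2 * gam) \<le> (2 * lam + s + gam)^2"
      using lam gam s by (simp add: power2_eq_square algebra_simps)
    then have "(2 * lam)^2 * (2 * lam + s + 2 * gam) \<le> 2 * lam * (2 * lam + s + gam)^2"
      using lam by (simp add: power2_eq_square mult.assoc mult_left_mono)
    then show ?thesis
      using lam gam s by (simp add: z1_def z2_def power_divide divide_le_eq le_divide_eq field_simps)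
  qed
  then have "2 * g z1 (u, v) - g z2 (u, v) \<le> 1"
    unfolding g_def using z1 z2 by (intro pgf_comb_le) auto
  moreover have "(2 * lam + s) / (2 * lam) > 1" using lam s by simp
  ultimately show ?thesis by linarith
qed

lemma eq_together: "L0 * (2 * lam + s) = 2 * lam * Mf (u, v)"
proof -
  define D where "D = (2 * lam + s) / (2 * lam) - 2 * g z1 (u, v) + g z2 (u, v)"
  define A0 where "A0 = 2 * gam * ((1 - g z1 (u, v)) / (s + gam) - (1 - g z2 (u, v)) / (s + 2 * gam))"
  have D: "0 < D" using D_pos by (simp add: D_def)
  have L: "L0 * D = A0" using D by (simp add: L0_def D_def A0_def)
  have M: "Mf (u, v) = A0 + (2 * g z1 (u, v) - g z2 (u, v)) * L0" by (simp add: Mf_def A0_def)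
  have "L0 * D * (2 * lam) = A0 * (2 * lam)" using L by simp
  moreover have "D * (2 * lam) = (2 * lam + s) - 2 * lam * (2 * g z1 (u, v) - g z2 (u, v))"
    unfolding D_def using lam by (simp add: field_simps)
  ultimately show ?thesis using M by algebra
qed

lemma Mf_edge: "Adj a b \<Longrightarrow> Mf (a, b) = Mf (u, v)"
  unfolding Mf_def using g_edge[of z1 a b] g_edge[of z2 a b] z1 z2 by simp

lemma sis_Rsum1': "Rsum R (p1, p2, i1, i2) (\<lambda>_. 1) = 2 * lam
  + (if i1 \<and> contact (p1, p2, False, i2) \<noteq> (p1, p2, i1, i2) then gam else 0)
  + (if i2 \<and> contact (p1, p2, i1, False) \<noteq> (p1, p2, i1, i2) then gam else 0)"
proof -
  have "(\<Sum>w\<in>nbrs Adj p1. lam / real (deg Adj p1) * 1) + (\<Sum>w\<in>nbrs Adj p2. lam / real (deg Adj p2) * 1) = 2 * lam"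
    using deg_pos[of p1] deg_pos[of p2] by (simp add: deg_def[symmetric])
  then show ?thesis unfolding sis_Rsum by simp
qed

lemma sis_RC: "Rsum R (p1, p2, i1, i2) C = Wk (\<lambda>q. C (fst q, snd q, i1, i2)) p1 p2
  + (if i1 \<and> contact (p1, p2, False, i2) \<noteq> (p1, p2, i1, i2) then gam * C (contact (p1, p2, False, i2)) else 0)
  + (if i2 \<and> contact (p1, p2, i1, False) \<noteq> (p1, p2, i1, i2) then gam * C (contact (p1, p2, i1, False)) else 0)"
  unfolding sis_Rsum moves_Wk ..

lemma R1pos: "0 < Rsum R x (\<lambda>_. 1)"
  using sis_Rsum1[of x] lam by linarith

lemma key_eq:
  assumes cx: "contact x = x" and ns: "x \<notin> all_susceptible"
  shows "C x * (Rsum R x (\<lambda>_. 1) + s) = Rsum R x C"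
proof -
  obtain p1 p2 i1 i2 where xe: "x = (p1, p2, i1, i2)" by (cases x) auto
  have ns: "i1 \<or> i2" using ns by (auto simp: xe all_susceptible_def)
  show ?thesis
  proof (cases "p1 = p2")
    case True
    then have ii: "i1" "i2" using cx ns by (auto simp: xe contact_simps)
    have W: "Wk (\<lambda>q. C (fst q, snd q, True, True)) p2 p2 = 2 * lam * Mf (u, v)"
    proof -
      have "Wk (\<lambda>q. C (fst q, snd q, True, True)) p2 p2 = Wk (\<lambda>_. Mf (u, v)) p2 p2"
        unfolding Wk_def C_def
        by (intro arg_cong2[where f = "(+)"] sum.cong refl)
           (auto simp: nbrs_def Mf_edge dest: sym)
      then show ?thesis by (simp add: Wk_const)
    qed
    have "Rsum R x C = 2 * lam * Mf (u, v)"
      unfolding xe True sis_RC using ii W by (simp add: contact_simps)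
    moreover have "Rsum R x (\<lambda>_. 1) = 2 * lam"
      unfolding xe True sis_Rsum1' using ii by (simp add: contact_simps)
    moreover have "C x = L0" unfolding xe True using ii by (simp add: C_def Mf_diag)
    ultimately show ?thesis using eq_together by (simp add: algebra_simps)
  next
    case False
    show ?thesis
    proof (cases "i1 \<and> i2")
      case True
      have "(\<lambda>q. C (fst q, snd q, True, True)) = Mf" by (simp add: C_def fun_eq_iff)
      then have "Rsum R x C = Wk Mf p1 p2 + 2 * gam * Kf (p1, p2)"
        unfolding xe sis_RC using True False by (simp add: contact_simps C_def)
      moreover have "Rsum R x (\<lambda>_. 1) = 2 * lam + 2 * gam"
        unfolding xe sis_Rsum1' using True False by (simp add: contact_simps)
      moreover have "C x = Mf (p1, p2)" unfolding xe using True by (simp add: C_def)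
      ultimately show ?thesis using eq_TT[OF False] by (simp add: algebra_simps)
    next
      case nTT: False
      have "(\<lambda>q. C (fst q, snd q, i1, i2)) = Kf" using nTT ns by (auto simp: C_def fun_eq_iff)
      then have "Rsum R x C = Wk Kf p1 p2 + gam"
        unfolding xe sis_RC using nTT ns False by (auto simp: contact_simps C_def)
      moreover have "Rsum R x (\<lambda>_. 1) = 2 * lam + gam"
        unfolding xe sis_Rsum1' using nTT ns False by (auto simp: contact_simps)
      moreover have "C x = Kf (p1, p2)" unfolding xe using nTT ns by (auto simp: C_def)
      ultimately show ?thesis using eq_K[OF False] by (simp add: algebra_simps)
    qed
  qed
qed

lemma C_step:
  assumes "contact x = x" "x \<notin> all_susceptible"
  shows "C x = 1 / (Rsum R x (\<lambda>_. 1) + s) * Rsum R x C"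
proof -
  have "0 < Rsum R x (\<lambda>_. 1) + s" using R1pos[of x] s by simp
  then show ?thesis using key_eq[OF assms] by (simp add: field_simps)
qed

lemma c_cond: "0 \<le> 1 / (Rsum R x (\<lambda>_. 1) + s) \<and> 1 / (Rsum R x (\<lambda>_. 1) + s) * Rsum R x (\<lambda>_. 1) < 1"
proof -
  have p: "0 < Rsum R x (\<lambda>_. 1)" by (rule R1pos)
  then have "0 < Rsum R x (\<lambda>_. 1) + s" using s by simp
  then show ?thesis using s by (simp add: divide_less_eq)
qed

definition T where "T y = hit_laplace R y all_susceptible s"

lemma T_eq_C: "\<forall>y\<in>{y. contact y = y}. T y = C y"
proof (rule uniq[where r = R and A = all_susceptible and c = "\<lambda>x. 1 / (Rsum R x (\<lambda>_. 1) + s)"])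
  show "\<And>x y. 0 \<le> R x y" by (rule sis_rnn)
  show "\<And>x y. x \<in> {y. contact y = y} - all_susceptible \<Longrightarrow> y \<noteq> x \<Longrightarrow> R x y \<noteq> 0 \<Longrightarrow> y \<in> {y. contact y = y}"
  proof -
    fix x y assume "R x y \<noteq> 0"
    then obtain z where "y = contact z" using sis_target by blast
    then show "y \<in> {y. contact y = y}" by (simp add: contact_idem)
  qed
  show "\<And>x. x \<in> {y. contact y = y} \<inter> all_susceptible \<Longrightarrow> T x = C x"
    by (auto simp: T_def HL_in C_def all_susceptible_def)
  show "\<And>x. x \<in> {y. contact y = y} - all_susceptible \<Longrightarrow> 0 \<le> 1 / (Rsum R x (\<lambda>_. 1) + s) \<and> 1 / (Rsum R x (\<lambda>_. 1) + s) * Rsum R x (\<lambda>_. 1) < 1"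
    by (rule c_cond)
  show "\<And>x. x \<in> {y. contact y = y} - all_susceptible \<Longrightarrow> T x = 1 / (Rsum R x (\<lambda>_. 1) + s) * Rsum R x T"
    unfolding T_def using s by (subst HL_step[OF sis_rnn sis_ne]) (auto simp: T_def[abs_def])
  show "\<And>x. x \<in> {y. contact y = y} - all_susceptible \<Longrightarrow> C x = 1 / (Rsum R x (\<lambda>_. 1) + s) * Rsum R x C"
    using C_step by auto
qed

lemma main: "sis_laplace Adj lam gam x0 s = L0"
proof -
  have "sis_laplace Adj lam gam x0 s = T (x0, x0, True, True)"
    by (simp add: sis_laplace_def T_def)
  also have "\<dots> = C (x0, x0, True, True)"
    using T_eq_C by (simp add: contact_simps)
  also have "\<dots> = L0" by (simp add: C_def Mf_diag)
  finally show ?thesis .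
qed

end


theorem corollary1:
  fixes Adj :: "'v::finite \<Rightarrow> 'v \<Rightarrow> bool"
    and lam gam s :: real and x0 u v :: 'v
  assumes "simple_graph Adj" and "graph_connected Adj" and "edge_transitive Adj"
    and "Adj u v"
    and "lam > 0" and "gam > 0" and "s > 0"
  shows "sis_laplace Adj lam gam x0 s =
    (2 * gam * ((1 - meet_pgf Adj lam u v (2 * lam / (2 * lam + s + gam))) / (s + gam)
              - (1 - meet_pgf Adj lam u v (2 * lam / (2 * lam + s + 2 * gam))) / (s + 2 * gam)))
    / ((2 * lam + s) / (2 * lam)
       - 2 * meet_pgf Adj lam u v (2 * lam / (2 * lam + s + gam))
       + meet_pgf Adj lam u v (2 * lam / (2 * lam + s + 2 * gam)))"
proof -
  interpret sis_setting Adj lam u v gam s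
    using assms by unfold_locales auto
  show ?thesis
    using main[of x0] unfolding L0_def z1_def z2_def g_def meet_pgf_def .
qed

end
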